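(* Let $\mathcal{C}=(C_1,\ldots,C_m)$, $m\ge 2$, be a camera arrangement with centers $c_1,\ldots,c_m$. (1) Let $L\subseteq\mathbb{P}^3$ be a line containing none of the centers. If there are two centers $c_i,c_j$ such that the span of $\{c_i,c_j\}\cup L$ is all of $\mathbb{P}^3$, then $$\mathcal{M}_\mathcal{C}^L=\{(x_1,\ldots,x_m)\in \mathcal{M}_{\mathcal{C}}:\ x_k\in C_k\cdot L \text{ for all } k\}.$$ (2) Let $X\in\mathbb{P}^3$ be a point distinct from all centers. If for each center $c_i$ the line spanned by $c_i$ and $X$ contains no center other than $c_i$, then $$\mathcal{L}_\mathcal{C}^X=\{(\ell_1,\ldots,\ell_m)\in \mathcal{L}_{\mathcal{C}}:\ \ell_k^T C_kX=0 \text{ for all } k\}.$$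
   Context: All spaces are complex projective. A camera is a full-rank $3\times 4$ complex matrix $C$, viewed as a rational map $\mathbb{P}^3\dashrightarrow\mathbb{P}^2$; its center is its kernel. A camera arrangement $\mathcal{C}=(C_1,\ldots,C_m)$, $m\ge2$, is a tuple of cameras with pairwise distinct centers. For a line $L\subseteq\mathbb{P}^3$ spanned by points $u,v$, $C\cdot L:=Cu\times Cv\in\mathbb{P}^2$ (cross product), identified with the image line $\{x\in\mathbb{P}^2: (C\cdot L)^Tx=0\}$; "$x\in C\cdot L$" means $x$ lies on this image line. The point multiview variety $\mathcal{M}_\mathcal{C}\subseteq(\mathbb{P}^2)^m$ is the Zariski closure of the image of $X\mapsto(C_1X,\ldots,C_mX)$; the line multiview variety $\mathcal{L}_\mathcal{C}\subseteq(\mathbb{P}^2)^m$ is the Zariski closure of the image of $L\mapsto(C_1\cdot L,\ldots,C_m\cdot L)$ on the Grassmannian $\mathrm{Gr}(1,\mathbb{P}^3)$ of lines. For a line $L$ containing no center, the anchored point multiview variety $\mathcal{M}_\mathcal{C}^L$ is the Zariski closure of the image of $L\to(\mathbb{P}^2)^m$, $X\mapsto (C_1X,\ldots,C_mX)$. For a point $X$ distinct from all centers, $\Lambda(X)$ denotes the set of lines in $\mathbb{P}^3$ through $X$, and the anchored line multiview variety $\mathcal{L}_\mathcal{C}^X$ is the Zariski closure of the image of $\Lambda(X)\dashrightarrow(\mathbb{P}^2)^m$, $L\mapsto(C_1\cdot L,\ldots,C_m\cdot L)$. *)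

theory Defs
  imports "HOL-Analysis.Analysis"
begin

text \<open>Projective points are represented by nonzero vectors (homogeneous coordinates).
  All sets of points below are sets of representatives, closed under nonzero rescaling
  of each factor.\<close>

definition proj_rep :: "'a::field^'n \<Rightarrow> 'a^'n \<Rightarrow> bool" where
  "proj_rep x y \<longleftrightarrow> y \<noteq> 0 \<and> (\<exists>a. a \<noteq> 0 \<and> x = a *s y)"

text \<open>Bilinear pairing x^T y (no complex conjugation).\<close>
definition bdot :: "complex^'n \<Rightarrow> complex^'n \<Rightarrow> complex" where
  "bdot x y = (\<Sum>i\<in>UNIV. x $ i * y $ i)"

definition cross3c :: "complex^3 \<Rightarrow> complex^3 \<Rightarrow> complex^3" where
  "cross3c u v = vector [u$2 * v$3 - u$3 * v$2, u$3 * v$1 - u$1 * v$3, u$1 * v$2 - u$2 * v$1]"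

definition camera :: "complex^4^3 \<Rightarrow> bool" where
  "camera C \<longleftrightarrow> rank C = 3"

definition center :: "complex^4^3 \<Rightarrow> complex^4" where
  "center C = (SOME c. c \<noteq> 0 \<and> C *v c = 0)"

definition camera_arrangement :: "('m::finite \<Rightarrow> complex^4^3) \<Rightarrow> bool" where
  "camera_arrangement Cs \<longleftrightarrow> CARD('m) \<ge> 2 \<and> (\<forall>k. camera (Cs k)) \<and>
     (\<forall>i j. i \<noteq> j \<longrightarrow> center (Cs i) \<notin> vec.span {center (Cs j)})"

definition is_line :: "complex^4 \<Rightarrow> complex^4 \<Rightarrow> bool" where
  "is_line u v \<longleftrightarrow> u \<noteq> v \<and> vec.independent {u, v}"

text \<open>C \<cdot> L for L = span(u,v).\<close>
definition line_image :: "complex^4^3 \<Rightarrow> complex^4 \<Rightarrow> complex^4 \<Rightarrow> complex^3" where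
  "line_image C u v = cross3c (C *v u) (C *v v)"

text \<open>Variables indexed by 'm \<times> 3 (factor k, coordinate i). A polynomial is a finite set of
  monomials M (exponent functions) with coefficients c.\<close>
definition poly_eval :: "(('m::finite \<times> 3) \<Rightarrow> nat) set \<Rightarrow> ((('m \<times> 3) \<Rightarrow> nat) \<Rightarrow> complex)
    \<Rightarrow> ('m \<Rightarrow> complex^3) \<Rightarrow> complex" where
  "poly_eval M c x = (\<Sum>\<alpha>\<in>M. c \<alpha> * (\<Prod>v\<in>UNIV. (x (fst v) $ snd v) ^ \<alpha> v))"

definition multihom :: "(('m::finite \<times> 3) \<Rightarrow> nat) set \<Rightarrow> ('m \<Rightarrow> nat) \<Rightarrow> bool" where
  "multihom M d \<longleftrightarrow> finite M \<and> (\<forall>\<alpha>\<in>M. \<forall>k. (\<Sum>i\<in>UNIV. \<alpha> (k, i)) = d k)"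

definition ptuples :: "('m::finite \<Rightarrow> complex^3) set" where
  "ptuples = {x. \<forall>k. x k \<noteq> 0}"

definition zclosure :: "('m::finite \<Rightarrow> complex^3) set \<Rightarrow> ('m \<Rightarrow> complex^3) set" where
  "zclosure S = {x \<in> ptuples. \<forall>M c d. multihom M d \<longrightarrow>
      (\<forall>y\<in>S. poly_eval M c y = 0) \<longrightarrow> poly_eval M c x = 0}"

definition point_mv :: "('m::finite \<Rightarrow> complex^4^3) \<Rightarrow> ('m \<Rightarrow> complex^3) set" where
  "point_mv Cs = zclosure {x. \<exists>X. X \<noteq> 0 \<and> (\<forall>k. proj_rep (x k) (Cs k *v X))}"

definition anch_point_mv :: "('m::finite \<Rightarrow> complex^4^3) \<Rightarrow> complex^4 \<Rightarrow> complex^4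
    \<Rightarrow> ('m \<Rightarrow> complex^3) set" where
  "anch_point_mv Cs u v = zclosure {x. \<exists>X\<in>vec.span {u, v}. X \<noteq> 0 \<and>
      (\<forall>k. proj_rep (x k) (Cs k *v X))}"

definition line_mv :: "('m::finite \<Rightarrow> complex^4^3) \<Rightarrow> ('m \<Rightarrow> complex^3) set" where
  "line_mv Cs = zclosure {l. \<exists>u v. is_line u v \<and>
      (\<forall>k. proj_rep (l k) (line_image (Cs k) u v))}"

text \<open>Lines through X are exactly the spans of X and some u independent of X.\<close>
definition anch_line_mv :: "('m::finite \<Rightarrow> complex^4^3) \<Rightarrow> complex^4 \<Rightarrow> ('m \<Rightarrow> complex^3) set" where
  "anch_line_mv Cs X = zclosure {l. \<exists>u. is_line X u \<and>
      (\<forall>k. proj_rep (l k) (line_image (Cs k) X u))}"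

end

theory Submission
  imports Defs
begin

definition ispoly :: "('m::finite \<Rightarrow> nat) \<Rightarrow> (('m \<Rightarrow> complex^3) \<Rightarrow> complex) \<Rightarrow> bool" where
  "ispoly d p \<longleftrightarrow> (\<exists>M c. multihom M d \<and> p = poly_eval M c)"

definition mon :: "(('m::finite \<times> 3) \<Rightarrow> nat) \<Rightarrow> ('m \<Rightarrow> complex^3) \<Rightarrow> complex" where
  "mon \<alpha> x = (\<Prod>v\<in>UNIV. (x (fst v) $ snd v) ^ \<alpha> v)"

lemma poly_eval_mon: "poly_eval M c x = (\<Sum>\<alpha>\<in>M. c \<alpha> * mon \<alpha> x)"
  by (simp add: poly_eval_def mon_def)

lemma mon_add: "mon (\<lambda>v. \<alpha> v + \<beta> v) x = mon \<alpha> x * mon \<beta> x"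
  by (simp add: mon_def power_add prod.distrib)

lemma ispoly_zero: "ispoly d (\<lambda>x. 0)"
  unfolding ispoly_def
  by (rule exI[of _ "{}"], rule exI[of _ "\<lambda>_. 0"]) (auto simp: multihom_def poly_eval_def fun_eq_iff)

lemma ispoly_const: "ispoly (\<lambda>_. 0) (\<lambda>x. a)"
  unfolding ispoly_def
  by (rule exI[of _ "{\<lambda>_. 0}"], rule exI[of _ "\<lambda>_. a"]) (auto simp: multihom_def poly_eval_def fun_eq_iff)

lemma ispoly_var: "ispoly (\<lambda>k'. if k' = k then 1 else 0) (\<lambda>x. x k $ i)"
proof -
  define \<alpha> where "\<alpha> = (\<lambda>v::'a \<times> 3. if v = (k, i) then 1 else (0::nat))"
  have m: "mon \<alpha> x = x k $ i" for x
  proof -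
    have "mon \<alpha> x = (\<Prod>v\<in>UNIV. if v = (k, i) then x (fst v) $ snd v else 1)"
      unfolding mon_def \<alpha>_def by (rule prod.cong) auto
    also have "\<dots> = x k $ i" by (subst prod.delta) auto
    finally show ?thesis .
  qed
  have h: "multihom {\<alpha>} (\<lambda>k'. if k' = k then 1 else 0)"
    unfolding multihom_def
  proof (intro conjI ballI allI)
    fix a k' assume "a \<in> {\<alpha>}"
    then have "a = \<alpha>" by simp
    show "(\<Sum>i'\<in>UNIV. a (k', i')) = (if k' = k then 1 else 0)"
      unfolding \<open>a = \<alpha>\<close> \<alpha>_def by (cases "k' = k") (auto simp: sum.delta)
  qed simp
  show ?thesis
    unfolding ispoly_def
    apply (rule exI[of _ "{\<alpha>}"], rule exI[of _ "\<lambda>_. 1"])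
    using h by (auto simp: poly_eval_mon m fun_eq_iff)
qed

lemma ispoly_add:
  assumes "ispoly d p" "ispoly d q" shows "ispoly d (\<lambda>x. p x + q x)"
proof -
  obtain M1 c1 where 1: "multihom M1 d" "p = poly_eval M1 c1" using assms(1) ispoly_def by blast
  obtain M2 c2 where 2: "multihom M2 d" "q = poly_eval M2 c2" using assms(2) ispoly_def by blast
  define c where "c = (\<lambda>\<gamma>. (if \<gamma> \<in> M1 then c1 \<gamma> else 0) + (if \<gamma> \<in> M2 then c2 \<gamma> else 0))"
  have f: "finite M1" "finite M2" using 1 2 by (auto simp: multihom_def)
  have "multihom (M1 \<union> M2) d" using 1 2 by (auto simp: multihom_def)
  moreover have "poly_eval (M1 \<union> M2) c x = p x + q x" for x
  proof -
    have "poly_eval (M1 \<union> M2) c x = (\<Sum>\<gamma>\<in>M1 \<union> M2. (if \<gamma> \<in> M1 then c1 \<gamma> * mon \<gamma> x else 0))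
        + (\<Sum>\<gamma>\<in>M1 \<union> M2. (if \<gamma> \<in> M2 then c2 \<gamma> * mon \<gamma> x else 0))"
      unfolding poly_eval_mon c_def sum.distrib[symmetric] by (intro sum.cong refl) (auto simp: algebra_simps)
    also have "\<dots> = (\<Sum>\<gamma>\<in>(M1 \<union> M2) \<inter> M1. c1 \<gamma> * mon \<gamma> x) + (\<Sum>\<gamma>\<in>(M1 \<union> M2) \<inter> M2. c2 \<gamma> * mon \<gamma> x)"
      using f by (simp only: sum.inter_restrict[symmetric] finite_Un)
    also have "(M1 \<union> M2) \<inter> M1 = M1" by blast
    also have "(M1 \<union> M2) \<inter> M2 = M2" by blast
    finally show ?thesis using 1 2 by (simp add: poly_eval_mon)
  qed
  ultimately show ?thesis unfolding ispoly_def by (intro exI[of _ "M1 \<union> M2"] exI[of _ c]) auto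
qed

lemma ispoly_mult:
  assumes "ispoly d p" "ispoly e q" shows "ispoly (\<lambda>k. d k + e k) (\<lambda>x. p x * q x)"
proof -
  obtain M1 c1 where 1: "multihom M1 d" "p = poly_eval M1 c1" using assms(1) ispoly_def by blast
  obtain M2 c2 where 2: "multihom M2 e" "q = poly_eval M2 c2" using assms(2) ispoly_def by blast
  have f: "finite M1" "finite M2" using 1 2 by (auto simp: multihom_def)
  define h where "h = (\<lambda>(\<alpha>::'a \<times> 3 \<Rightarrow> nat, \<beta>::'a \<times> 3 \<Rightarrow> nat). (\<lambda>v. \<alpha> v + \<beta> v))"
  define M where "M = h ` (M1 \<times> M2)"
  define c where "c = (\<lambda>\<gamma>. \<Sum>ab\<in>{ab \<in> M1 \<times> M2. h ab = \<gamma>}. c1 (fst ab) * c2 (snd ab))"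
  have "multihom M (\<lambda>k. d k + e k)"
    using 1 2 f unfolding multihom_def M_def h_def by (auto simp: sum.distrib)
  moreover have "poly_eval M c x = p x * q x" for x
  proof -
    have "poly_eval M c x = (\<Sum>\<gamma>\<in>h ` (M1 \<times> M2). \<Sum>ab\<in>{ab \<in> M1 \<times> M2. h ab = \<gamma>}. c1 (fst ab) * c2 (snd ab) * mon (h ab) x)"
      unfolding poly_eval_mon c_def M_def sum_distrib_right
      by (intro sum.cong refl) auto
    also have "\<dots> = (\<Sum>ab\<in>M1 \<times> M2. c1 (fst ab) * c2 (snd ab) * mon (h ab) x)"
      using f by (subst sum.image_gen[symmetric]) auto
    also have "\<dots> = (\<Sum>ab\<in>M1 \<times> M2. (c1 (fst ab) * mon (fst ab) x) * (c2 (snd ab) * mon (snd ab) x))"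
      by (intro sum.cong refl) (auto simp: h_def mon_add)
    also have "\<dots> = p x * q x"
      using 1 2 by (simp add: poly_eval_mon sum_product sum.cartesian_product split_def)
    finally show ?thesis .
  qed
  ultimately show ?thesis unfolding ispoly_def by (intro exI[of _ M] exI[of _ c]) (auto simp: fun_eq_iff)
qed

lemma ispoly_cmult: assumes "ispoly d p" shows "ispoly d (\<lambda>x. a * p x)"
  using ispoly_mult[OF ispoly_const assms, of a] by simp

lemma ispoly_sum:
  assumes "finite I" "\<And>i. i \<in> I \<Longrightarrow> ispoly d (p i)"
  shows "ispoly d (\<lambda>x. \<Sum>i\<in>I. p i x)"
  using assms by (induction I rule: finite_induct) (auto intro: ispoly_zero ispoly_add)

lemma ispoly_prod:
  assumes "finite I" "\<And>i. i \<in> I \<Longrightarrow> ispoly (d i) (p i)"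
  shows "ispoly (\<lambda>k. \<Sum>i\<in>I. d i k) (\<lambda>x. \<Prod>i\<in>I. p i x)"
  using assms
proof (induction I rule: finite_induct)
  case empty
  then show ?case using ispoly_const[of 1] by simp
next
  case (insert i I)
  have "ispoly (\<lambda>k. d i k + (\<Sum>i\<in>I. d i k)) (\<lambda>x. p i x * (\<Prod>i\<in>I. p i x))"
    using insert by (intro ispoly_mult) auto
  then show ?case using insert by simp
qed

lemma ispoly_det:
  fixes A :: "('m::finite \<Rightarrow> complex^3) \<Rightarrow> complex^'n^'n"
  assumes "\<And>i j. ispoly (D i) (\<lambda>x. A x $ i $ j)"
  shows "ispoly (\<lambda>k. \<Sum>i\<in>UNIV. D i k) (\<lambda>x. det (A x))"
  unfolding det_def
  by (intro ispoly_sum ispoly_cmult ispoly_prod assms finite_permutations) auto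

lemma ispoly_matvec:
  fixes A :: "complex^3^'n"
  shows "ispoly (\<lambda>k'. if k' = k then 1 else 0) (\<lambda>x. (A *v x k) $ j)"
  unfolding matrix_vector_mult_def
  by (simp, intro ispoly_sum ispoly_cmult ispoly_var) auto

lemma zclosure_poly:
  assumes "x \<in> zclosure S" "ispoly d p" "\<And>y. y \<in> S \<Longrightarrow> p y = 0"
  shows "p x = 0"
  using assms unfolding zclosure_def ispoly_def by auto

lemma zclosure_mono: "S \<subseteq> T \<Longrightarrow> zclosure S \<subseteq> zclosure T"
  unfolding zclosure_def by blast

lemma zclosure_base: "x \<in> S \<Longrightarrow> x \<in> ptuples \<Longrightarrow> x \<in> zclosure S"
  unfolding zclosure_def by blast

lemma zclosure_ptuples: "x \<in> zclosure S \<Longrightarrow> x \<in> ptuples"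
  unfolding zclosure_def by blast

lemma bdot_add_left: "bdot (x + y) z = bdot x z + bdot y z"
  by (simp add: bdot_def algebra_simps sum.distrib)
lemma bdot_add_right: "bdot z (x + y) = bdot z x + bdot z y"
  by (simp add: bdot_def algebra_simps sum.distrib)
lemma bdot_diff_left: "bdot (x - y) z = bdot x z - bdot y z"
  by (simp add: bdot_def algebra_simps sum_subtractf)
lemma bdot_diff_right: "bdot z (x - y) = bdot z x - bdot z y"
  by (simp add: bdot_def algebra_simps sum_subtractf)
lemma bdot_scale_left: "bdot (a *s x) z = a * bdot x z"
  by (simp add: bdot_def sum_distrib_left algebra_simps)
lemma bdot_scale_right: "bdot z (a *s x) = a * bdot z x"
  by (simp add: bdot_def sum_distrib_left algebra_simps)
lemma bdot_zero_left[simp]: "bdot 0 z = 0"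
  by (simp add: bdot_def)
lemma bdot_zero_right[simp]: "bdot z 0 = 0"
  by (simp add: bdot_def)
lemma bdot_comm: "bdot x y = bdot y x"
  by (simp add: bdot_def mult.commute)
lemmas bdot_simps = bdot_add_left bdot_add_right bdot_diff_left bdot_diff_right bdot_scale_left bdot_scale_right

lemma bdot3: "bdot (x::complex^3) y = x$1*y$1 + x$2*y$2 + x$3*y$3"
  by (simp add: bdot_def sum_3)
lemma bdot4: "bdot (x::complex^4) y = x$1*y$1 + x$2*y$2 + x$3*y$3 + x$4*y$4"
  by (simp add: bdot_def sum_4)

lemma matvec_nth: "(A *v z) $ i = bdot (A $ i) z"
  by (simp add: matrix_vector_mult_def bdot_def)

lemma bdot_transpose: "bdot (transpose C *v l) w = bdot l (C *v w)"
  by (simp add: bdot_def matrix_vector_mult_def transpose_def sum_distrib_left sum_distrib_right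
      algebra_simps; subst sum.swap; simp add: mult_ac)

lemma matvec_add: "(A::complex^'n^'m) *v (x + y) = A *v x + A *v y"
  by (simp add: matrix_vector_mult_def vec_eq_iff sum.distrib algebra_simps)
lemma matvec_scale: "(A::complex^'n^'m) *v (a *s x) = a *s (A *v x)"
  by (simp add: matrix_vector_mult_def vec_eq_iff sum_distrib_left mult_ac)
lemma matvec_diff: "(A::complex^'n^'m) *v (x - y) = A *v x - A *v y"
  by (simp add: matrix_vector_mult_def vec_eq_iff sum_subtractf right_diff_distrib)

section \<open>cross product\<close>

lemma cross_nth:
  "cross3c u v $ 1 = u$2 * v$3 - u$3 * v$2"
  "cross3c u v $ 2 = u$3 * v$1 - u$1 * v$3"
  "cross3c u v $ 3 = u$1 * v$2 - u$2 * v$1"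
  by (simp_all add: cross3c_def)

lemma bdot_cross_1: "bdot (cross3c a b) a = 0"
  by (simp add: bdot3 cross_nth algebra_simps)
lemma bdot_cross_2: "bdot (cross3c a b) b = 0"
  by (simp add: bdot3 cross_nth algebra_simps)

lemma cross_add_right: "cross3c a (b + c) = cross3c a b + cross3c a c"
  by (simp add: vec_eq_iff forall_3 cross_nth algebra_simps)
lemma cross_scale_right: "cross3c a (s *s b) = s *s cross3c a b"
  by (simp add: vec_eq_iff forall_3 cross_nth algebra_simps)

lemma vec3_eq: "(x::'a^3) = y \<longleftrightarrow> x$1 = y$1 \<and> x$2 = y$2 \<and> x$3 = y$3"
  by (simp add: vec_eq_iff forall_3)
lemma vec4_eq: "(x::'a^4) = y \<longleftrightarrow> x$1 = y$1 \<and> x$2 = y$2 \<and> x$3 = y$3 \<and> x$4 = y$4"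
  by (simp add: vec_eq_iff forall_4)

lemma cross_zero_dep:
  assumes "cross3c a b = 0"
  shows "\<exists>\<alpha> \<beta>. (\<alpha> \<noteq> 0 \<or> \<beta> \<noteq> 0) \<and> \<alpha> *s a + \<beta> *s b = 0"
proof (cases "a = 0")
  case True
  then show ?thesis by (intro exI[of _ 1] exI[of _ 0]) simp
next
  case False
  then obtain i where i: "a $ i \<noteq> 0" by (auto simp: vec_eq_iff)
  have c: "a$2 * b$3 = a$3 * b$2" "a$3 * b$1 = a$1 * b$3" "a$1 * b$2 = a$2 * b$1"
    using assms by (auto simp: vec3_eq cross_nth)
  have "(b $ i) *s a + (- (a $ i)) *s b = 0"
    using exhaust_3[of i] c by (auto simp: vec3_eq algebra_simps)
  moreover have "- (a $ i) \<noteq> 0" using i by simp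
  ultimately show ?thesis by blast
qed

lemma cross_proj:
  assumes "l \<noteq> 0" "bdot l a = 0" "bdot l b = 0" "cross3c a b \<noteq> 0"
  shows "proj_rep l (cross3c a b)"
proof -
  let ?n = "cross3c a b"
  obtain i where i: "?n $ i \<noteq> 0" using assms(4) by (auto simp: vec_eq_iff)
  have e: "l$1*a$1 + l$2*a$2 + l$3*a$3 = 0" "l$1*b$1 + l$2*b$2 + l$3*b$3 = 0"
    using assms(2,3) by (simp_all add: bdot3)
  have lx: "l$2 * ?n$3 = l$3 * ?n$2" "l$3 * ?n$1 = l$1 * ?n$3" "l$1 * ?n$2 = l$2 * ?n$1"
  proof -
    show "l$2 * ?n$3 = l$3 * ?n$2"
      unfolding cross_nth using e by algebra
    show "l$3 * ?n$1 = l$1 * ?n$3"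
      unfolding cross_nth using e by algebra
    show "l$1 * ?n$2 = l$2 * ?n$1"
      unfolding cross_nth using e by algebra
  qed
  have leq: "l = (l $ i / ?n $ i) *s ?n"
    using exhaust_3[of i] lx i by (auto simp: vec3_eq field_simps)
  have "l $ i \<noteq> 0"
  proof
    assume "l $ i = 0"
    then have "l = 0" using leq by simp
    then show False using assms(1) by simp
  qed
  then show ?thesis unfolding proj_rep_def using assms(4) leq i
    by (intro conjI exI[of _ "l $ i / ?n $ i"]) auto
qed

section \<open>4x4 determinants by rows\<close>

definition mk4 :: "complex^4 \<Rightarrow> complex^4 \<Rightarrow> complex^4 \<Rightarrow> complex^4 \<Rightarrow> complex^4^4" where
  "mk4 a b c d = (\<chi> i. if i = 1 then a else if i = 2 then b else if i = 3 then c else d)"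

lemma mk4_nth[simp]: "mk4 a b c d $ 1 = a" "mk4 a b c d $ 2 = b" "mk4 a b c d $ 3 = c" "mk4 a b c d $ 4 = d"
  by (simp_all add: mk4_def)

definition D4 :: "complex^4 \<Rightarrow> complex^4 \<Rightarrow> complex^4 \<Rightarrow> complex^4 \<Rightarrow> complex" where
  "D4 a b c d = det (mk4 a b c d)"

lemma det_4:
  "det (A::'a::comm_ring_1^4^4) =
 A$1$1*A$2$2*A$3$3*A$4$4 - A$1$1*A$2$2*A$3$4*A$4$3 - A$1$1*A$2$3*A$3$2*A$4$4 + A$1$1*A$2$3*A$3$4*A$4$2 + A$1$1*A$2$4*A$3$2*A$4$3 - A$1$1*A$2$4*A$3$3*A$4$2
 - A$1$2*A$2$1*A$3$3*A$4$4 + A$1$2*A$2$1*A$3$4*A$4$3 + A$1$2*A$2$3*A$3$1*A$4$4 - A$1$2*A$2$3*A$3$4*A$4$1 - A$1$2*A$2$4*A$3$1*A$4$3 + A$1$2*A$2$4*A$3$3*A$4$1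
 + A$1$3*A$2$1*A$3$2*A$4$4 - A$1$3*A$2$1*A$3$4*A$4$2 - A$1$3*A$2$2*A$3$1*A$4$4 + A$1$3*A$2$2*A$3$4*A$4$1 + A$1$3*A$2$4*A$3$1*A$4$2 - A$1$3*A$2$4*A$3$2*A$4$1
 - A$1$4*A$2$1*A$3$2*A$4$3 + A$1$4*A$2$1*A$3$3*A$4$2 + A$1$4*A$2$2*A$3$1*A$4$3 - A$1$4*A$2$2*A$3$3*A$4$1 - A$1$4*A$2$3*A$3$1*A$4$2 + A$1$4*A$2$3*A$3$2*A$4$1"
proof -
  have f1: "finite {2::4, 3, 4}" "1 \<notin> {2::4, 3, 4}" by auto
  have f2: "finite {3::4, 4}" "2 \<notin> {3::4, 4}" by auto
  have f3: "finite {4::4}" "3 \<notin> {4::4}" by auto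
  show ?thesis
    unfolding det_def UNIV_4
    unfolding sum_over_permutations_insert[OF f1]
    unfolding sum_over_permutations_insert[OF f2]
    unfolding sum_over_permutations_insert[OF f3]
    unfolding permutes_sing
    by (simp add: sign_swap_id permutation_swap_id permutation_compose sign_compose sign_id swap_id_eq algebra_simps)
qed

lemma D4_expand: "D4 a b c d =
 a$1*b$2*c$3*d$4 - a$1*b$2*c$4*d$3 - a$1*b$3*c$2*d$4 + a$1*b$3*c$4*d$2 + a$1*b$4*c$2*d$3 - a$1*b$4*c$3*d$2
 - a$2*b$1*c$3*d$4 + a$2*b$1*c$4*d$3 + a$2*b$3*c$1*d$4 - a$2*b$3*c$4*d$1 - a$2*b$4*c$1*d$3 + a$2*b$4*c$3*d$1
 + a$3*b$1*c$2*d$4 - a$3*b$1*c$4*d$2 - a$3*b$2*c$1*d$4 + a$3*b$2*c$4*d$1 + a$3*b$4*c$1*d$2 - a$3*b$4*c$2*d$1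
 - a$4*b$1*c$2*d$3 + a$4*b$1*c$3*d$2 + a$4*b$2*c$1*d$3 - a$4*b$2*c$3*d$1 - a$4*b$3*c$1*d$2 + a$4*b$3*c$2*d$1"
  unfolding D4_def det_4 by simp

lemma D4_add1: "D4 (x + y) b c d = D4 x b c d + D4 y b c d" by (simp add: D4_expand algebra_simps)
lemma D4_add2: "D4 a (x + y) c d = D4 a x c d + D4 a y c d" by (simp add: D4_expand algebra_simps)
lemma D4_add3: "D4 a b (x + y) d = D4 a b x d + D4 a b y d" by (simp add: D4_expand algebra_simps)
lemma D4_add4: "D4 a b c (x + y) = D4 a b c x + D4 a b c y" by (simp add: D4_expand algebra_simps)
lemma D4_diff1: "D4 (x - y) b c d = D4 x b c d - D4 y b c d" by (simp add: D4_expand algebra_simps)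
lemma D4_diff2: "D4 a (x - y) c d = D4 a x c d - D4 a y c d" by (simp add: D4_expand algebra_simps)
lemma D4_diff3: "D4 a b (x - y) d = D4 a b x d - D4 a b y d" by (simp add: D4_expand algebra_simps)
lemma D4_diff4: "D4 a b c (x - y) = D4 a b c x - D4 a b c y" by (simp add: D4_expand algebra_simps)
lemma D4_scale1: "D4 (s *s x) b c d = s * D4 x b c d" by (simp add: D4_expand algebra_simps)
lemma D4_scale2: "D4 a (s *s x) c d = s * D4 a x c d" by (simp add: D4_expand algebra_simps)
lemma D4_scale3: "D4 a b (s *s x) d = s * D4 a b x d" by (simp add: D4_expand algebra_simps)
lemma D4_scale4: "D4 a b c (s *s x) = s * D4 a b c x" by (simp add: D4_expand algebra_simps)
lemma D4_eq:
  "D4 a a c d = 0" "D4 a b a d = 0" "D4 a b c a = 0" "D4 a b b d = 0" "D4 a b c b = 0" "D4 a b c c = 0"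
  by (simp_all add: D4_expand algebra_simps)
lemma D4_zero: "D4 0 b c d = 0" "D4 a 0 c d = 0" "D4 a b 0 d = 0" "D4 a b c 0 = 0"
  by (simp_all add: D4_expand)
lemma D4_swap24: "D4 a d c b = - D4 a b c d" by (simp add: D4_expand algebra_simps)
lemma D4_swap12: "D4 b a c d = - D4 a b c d" by (simp add: D4_expand algebra_simps)
lemma D4_swap34: "D4 a b d c = - D4 a b c d" by (simp add: D4_expand algebra_simps)
lemma D4_swap23: "D4 a c b d = - D4 a b c d" by (simp add: D4_expand algebra_simps)

lemmas D4_lin = D4_add1 D4_add2 D4_add3 D4_add4 D4_diff1 D4_diff2 D4_diff3 D4_diff4
  D4_scale1 D4_scale2 D4_scale3 D4_scale4 D4_eq D4_zero

lemma mk4_mv_zero: "mk4 a b c d *v z = 0 \<longleftrightarrow> bdot a z = 0 \<and> bdot b z = 0 \<and> bdot c z = 0 \<and> bdot d z = 0"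
  by (simp add: vec4_eq matvec_nth)

lemma D4_inj:
  assumes "D4 a b c d \<noteq> 0" "bdot a z = 0" "bdot b z = 0" "bdot c z = 0" "bdot d z = 0"
  shows "z = 0"
proof -
  have "invertible (mk4 a b c d)" using assms(1) invertible_det_nz D4_def by metis
  then have "inj ((*v) (mk4 a b c d))" by (rule inj_matrix_vector_mult)
  moreover have "mk4 a b c d *v z = mk4 a b c d *v 0"
    using assms(2-) by (simp add: mk4_mv_zero)
  ultimately show ?thesis by (metis injD matrix_vector_mult_0_right)
qed

lemma D4_ker:
  assumes "D4 a b c d = 0"
  shows "\<exists>z. z \<noteq> 0 \<and> bdot a z = 0 \<and> bdot b z = 0 \<and> bdot c z = 0 \<and> bdot d z = 0"
proof -
  have "\<not> invertible (mk4 a b c d)" using assms invertible_det_nz D4_def by metis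
  then have "\<not> (\<forall>x. mk4 a b c d *v x = 0 \<longrightarrow> x = 0)"
    using invertible_left_inverse matrix_left_invertible_ker by metis
  then show ?thesis by (auto simp: mk4_mv_zero)
qed

lemma D4_dep:
  assumes "D4 a b c d = 0"
  shows "\<exists>y1 y2 y3 y4. (y1 \<noteq> 0 \<or> y2 \<noteq> 0 \<or> y3 \<noteq> 0 \<or> y4 \<noteq> 0) \<and>
     y1 *s a + y2 *s b + y3 *s c + y4 *s d = 0"
proof -
  have "det (transpose (mk4 a b c d)) = 0" using assms by (simp add: D4_def)
  then have "\<not> invertible (transpose (mk4 a b c d))" using invertible_det_nz by metis
  then have "\<not> (\<forall>x. transpose (mk4 a b c d) *v x = 0 \<longrightarrow> x = 0)"
    using invertible_left_inverse matrix_left_invertible_ker by metis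
  then obtain y where y: "y \<noteq> 0" "transpose (mk4 a b c d) *v y = 0" by blast
  have "y$1 *s a + y$2 *s b + y$3 *s c + y$4 *s d = 0"
    using y(2) by (simp add: vec_eq_iff matrix_vector_mult_def transpose_def sum_4 algebra_simps)
  moreover have "y$1 \<noteq> 0 \<or> y$2 \<noteq> 0 \<or> y$3 \<noteq> 0 \<or> y$4 \<noteq> 0" using y(1) by (auto simp: vec4_eq)
  ultimately show ?thesis by blast
qed

definition mk3 :: "complex^3 \<Rightarrow> complex^3 \<Rightarrow> complex^3 \<Rightarrow> complex^3^3" where
  "mk3 a b c = (\<chi> i. if i = 1 then a else if i = 2 then b else c)"

lemma mk3_nth[simp]: "mk3 a b c $ 1 = a" "mk3 a b c $ 2 = b" "mk3 a b c $ 3 = c"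
  by (simp_all add: mk3_def)

lemma det_mk3: "det (mk3 a b x) = bdot (cross3c a b) x"
  by (simp add: det_3 bdot3 cross_nth algebra_simps)

lemma D3_dep:
  assumes "det (mk3 a b c) = 0"
  shows "\<exists>y1 y2 y3. (y1 \<noteq> 0 \<or> y2 \<noteq> 0 \<or> y3 \<noteq> 0) \<and> y1 *s a + y2 *s b + y3 *s c = 0"
proof -
  have "det (transpose (mk3 a b c)) = 0" using assms by simp
  then have "\<not> invertible (transpose (mk3 a b c))" using invertible_det_nz by metis
  then have "\<not> (\<forall>x. transpose (mk3 a b c) *v x = 0 \<longrightarrow> x = 0)"
    using invertible_left_inverse matrix_left_invertible_ker by metis
  then obtain y where y: "y \<noteq> 0" "transpose (mk3 a b c) *v y = 0" by blast
  have "y$1 *s a + y$2 *s b + y$3 *s c = 0"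
    using y(2) by (simp add: vec_eq_iff matrix_vector_mult_def transpose_def sum_3 algebra_simps)
  moreover have "y$1 \<noteq> 0 \<or> y$2 \<noteq> 0 \<or> y$3 \<noteq> 0" using y(1) by (auto simp: vec3_eq)
  ultimately show ?thesis by blast
qed

definition ind2 :: "complex^4 \<Rightarrow> complex^4 \<Rightarrow> bool" where
  "ind2 a b \<longleftrightarrow> (\<forall>\<alpha> \<beta>. \<alpha> *s a + \<beta> *s b = 0 \<longrightarrow> \<alpha> = 0 \<and> \<beta> = 0)"

definition ind3 :: "complex^4 \<Rightarrow> complex^4 \<Rightarrow> complex^4 \<Rightarrow> bool" where
  "ind3 a b c \<longleftrightarrow> (\<forall>\<alpha> \<beta> \<gamma>. \<alpha> *s a + \<beta> *s b + \<gamma> *s c = 0 \<longrightarrow> \<alpha> = 0 \<and> \<beta> = 0 \<and> \<gamma> = 0)"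

lemma span1: "x \<in> vec.span {a} \<longleftrightarrow> (\<exists>\<mu>. x = \<mu> *s a)"
  by (auto simp: vec.span_singleton)

lemma span2: "x \<in> vec.span {a, b} \<longleftrightarrow> (\<exists>\<alpha> \<beta>. x = \<alpha> *s a + \<beta> *s b)"
proof -
  have "x \<in> vec.span {a, b} \<longleftrightarrow> (\<exists>k. x - k *s a \<in> vec.span {b})"
    using vec.span_insert[of a "{b}"] by auto
  also have "\<dots> \<longleftrightarrow> (\<exists>k \<mu>. x - k *s a = \<mu> *s b)" by (simp add: span1)
  also have "\<dots> \<longleftrightarrow> (\<exists>\<alpha> \<beta>. x = \<alpha> *s a + \<beta> *s b)"
  proof -
    have "\<And>k \<mu>. (x - k *s a = \<mu> *s b) \<longleftrightarrow> (x = k *s a + \<mu> *s b)"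
      by (auto simp: algebra_simps)
    then show ?thesis by blast
  qed
  finally show ?thesis .
qed

lemma is_line_ind2: "is_line u v \<longleftrightarrow> ind2 u v"
proof
  assume "is_line u v"
  then have uv: "u \<noteq> v" "vec.independent {u, v}" by (auto simp: is_line_def)
  then have v0: "v \<noteq> 0" and nsp: "u \<notin> vec.span {v}"
    using vec.independent_insert[of u "{v}"] by auto
  show "ind2 u v" unfolding ind2_def
  proof (intro allI impI)
    fix \<alpha> \<beta> assume h: "\<alpha> *s u + \<beta> *s v = 0"
    have "\<alpha> = 0"
    proof (rule ccontr)
      assume "\<alpha> \<noteq> 0"
      have "\<forall>i. \<alpha> * u$i + \<beta> * v$i = 0" using h by (simp add: vec_eq_iff)
      then have "u = (- \<beta> / \<alpha>) *s v" using \<open>\<alpha> \<noteq> 0\<close>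
        by (simp add: vec_eq_iff field_simps eq_neg_iff_add_eq_0)
      then show False using nsp unfolding span1 by blast
    qed
    then show "\<alpha> = 0 \<and> \<beta> = 0" using h v0 by simp
  qed
next
  assume h: "ind2 u v"
  have "v \<noteq> 0" using h[unfolded ind2_def, rule_format, of 0 1] by auto
  moreover have "u \<notin> vec.span {v}"
  proof
    assume "u \<in> vec.span {v}"
    then obtain \<mu> where "u = \<mu> *s v" by (auto simp: span1)
    then have "1 *s u + (- \<mu>) *s v = 0" by simp
    then show False using h unfolding ind2_def by (metis zero_neq_one)
  qed
  moreover have "u \<noteq> v"
  proof
    assume "u = v"
    then have "1 *s u + (- 1) *s v = 0" by simp
    then show False using h unfolding ind2_def by (metis zero_neq_one)
  qed
  ultimately show "is_line u v"
    unfolding is_line_def using vec.independent_insert[of u "{v}"] by auto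
qed

lemma bdot_axis: "bdot (axis i 1) z = z $ i"
proof -
  have "bdot (axis i 1) z = (\<Sum>j\<in>UNIV. if j = i then z $ j else 0)"
    unfolding bdot_def axis_def by (intro sum.cong) auto
  also have "\<dots> = z $ i" by (simp add: sum.delta')
  finally show ?thesis .
qed

lemma span_UNIV_kill:
  assumes "vec.span {a, b, c, d} = UNIV" "bdot a z = 0" "bdot b z = 0" "bdot c z = 0" "bdot d z = 0"
  shows "z = 0"
proof -
  have "bdot w z = 0" for w
  proof -
    have "w \<in> vec.span {a, b, c, d}" using assms(1) by simp
    then show ?thesis
    proof (induction rule: vec.span_induct_alt)
      case base then show ?case by simp
    next
      case (step c' x y) then show ?case using assms(2-) by (auto simp: bdot_simps)
    qed
  qed
  from this[of "axis _ 1"] show ?thesis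
    by (simp add: vec_eq_iff bdot_axis)
qed

section \<open>cameras\<close>

lemma cam_rows_indep:
  assumes "camera C"
  shows "\<forall>c. (\<Sum>i\<in>UNIV. c i *s row i C) = 0 \<longrightarrow> (\<forall>i. c i = 0)"
proof (rule ccontr)
  assume "\<not> ?thesis"
  then obtain c i0 where c: "(\<Sum>i\<in>UNIV. c i *s row i C) = 0" "c i0 \<noteq> 0" by blast
  define R where "R = (\<lambda>i. row i C) ` (UNIV - {i0})"
  have "(\<Sum>i\<in>UNIV. c i *s row i C) = c i0 *s row i0 C + (\<Sum>i\<in>UNIV - {i0}. c i *s row i C)"
    by (rule sum.remove) auto
  then have eq: "c i0 *s row i0 C = - (\<Sum>i\<in>UNIV - {i0}. c i *s row i C)" using c(1)
    by (simp add: eq_neg_iff_add_eq_0)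
  have "row i0 C = (1 / c i0) *s (c i0 *s row i0 C)"
    using c(2) by (simp add: vector_smult_assoc)
  also have "\<dots> = (1 / c i0) *s (- (\<Sum>i\<in>UNIV - {i0}. c i *s row i C))"
    by (subst eq) (rule refl)
  finally have rq: "row i0 C = (1 / c i0) *s (- (\<Sum>i\<in>UNIV - {i0}. c i *s row i C))" .
  have sp: "(- (\<Sum>i\<in>UNIV - {i0}. c i *s row i C)) \<in> vec.span R"
    unfolding R_def by (intro vec.span_neg vec.span_sum vec.span_scale vec.span_base) auto
  have r0: "row i0 C \<in> vec.span R" unfolding rq by (rule vec.span_scale[OF sp])
  have "rows C \<subseteq> vec.span R"
  proof
    fix r assume "r \<in> rows C"
    then obtain i where "r = row i C" by (auto simp: rows_def)
    then show "r \<in> vec.span R"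
      using r0 by (cases "i = i0") (auto simp: R_def intro: vec.span_base)
  qed
  then have "vec.dim (rows C) \<le> card R" by (intro vec.dim_le_card) (auto simp: R_def)
  also have "card R \<le> card (UNIV - {i0})" unfolding R_def by (rule card_image_le) simp
  also have "\<dots> = 2" by simp
  finally have "vec.dim (rows C) \<le> 2" .
  moreover have "vec.dim (rows C) = 3" using assms unfolding camera_def row_rank_def_gen .
  ultimately show False by linarith
qed



lemma cam_rinv: "camera C \<Longrightarrow> \<exists>B. C ** B = mat 1"
  using cam_rows_indep matrix_right_invertible_independent_rows by blast

lemma cam_T_inj:
  assumes "camera C" "transpose C *v l = 0" shows "l = 0"
proof -
  obtain B where "C ** B = mat 1" using cam_rinv[OF assms(1)] by blast
  then have "transpose B ** transpose C = mat 1" by (metis matrix_transpose_mul transpose_mat)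
  then have "l = transpose B *v (transpose C *v l)" by (metis matrix_vector_mul_assoc matrix_vector_mul_lid)
  then show ?thesis using assms(2) by (metis matrix_vector_mult_0_right)
qed

lemma rowsC_kill: "bdot (C $ 1) z = 0 \<Longrightarrow> bdot (C $ 2) z = 0 \<Longrightarrow> bdot (C $ 3) z = 0 \<Longrightarrow> (C::complex^4^3) *v z = 0"
  by (simp add: vec3_eq matvec_nth)

lemma cam_center:
  assumes "camera C" shows "center C \<noteq> 0 \<and> C *v center C = 0"
proof -
  obtain z where "z \<noteq> 0" "bdot (C $ 1) z = 0" "bdot (C $ 2) z = 0" "bdot (C $ 3) z = 0"
    using D4_ker[of "C $ 1" "C $ 2" "C $ 3" 0] by (auto simp: D4_zero)
  then have "\<exists>c. c \<noteq> 0 \<and> C *v c = 0" using rowsC_kill by blast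
  then show ?thesis unfolding center_def by (rule someI_ex)
qed

lemma cam_ker:
  assumes "camera C" "C *v P = 0" shows "\<exists>\<mu>. P = \<mu> *s center C"
proof -
  define c where "c = center C"
  have c: "c \<noteq> 0" "C *v c = 0" using cam_center[OF assms(1)] by (auto simp: c_def)
  obtain k where k: "c $ k \<noteq> 0" using c(1) by (auto simp: vec_eq_iff)
  define Q where "Q = P - (P $ k / c $ k) *s c"
  have CQ: "C *v Q = 0" using assms(2) c(2) by (simp add: Q_def matvec_diff matvec_scale)
  have Qk: "Q $ k = 0" using k by (simp add: Q_def)
  have "D4 (C $ 1) (C $ 2) (C $ 3) (axis k 1) \<noteq> 0"
  proof
    assume "D4 (C $ 1) (C $ 2) (C $ 3) (axis k 1) = 0"
    from D4_dep[OF this] obtain y1 y2 y3 y4 where y: "y1 \<noteq> 0 \<or> y2 \<noteq> 0 \<or> y3 \<noteq> 0 \<or> y4 \<noteq> 0"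
      "y1 *s C $ 1 + y2 *s C $ 2 + y3 *s C $ 3 + y4 *s axis k 1 = 0"
      by blast
    have "bdot (y1 *s C $ 1 + y2 *s C $ 2 + y3 *s C $ 3 + y4 *s axis k 1) c = 0" using y(2) by simp
    moreover have "bdot (C $ i) c = 0" for i using c(2) matvec_nth[of C c i] by simp
    moreover have "bdot (axis k 1) c = c $ k" by (rule bdot_axis)
    ultimately have "y4 = 0" using k by (simp add: bdot_simps)
    define yv :: "complex^3" where "yv = vector [y1, y2, y3]"
    have yc: "\<forall>j. y1 * C$1$j + y2 * C$2$j + y3 * C$3$j = 0"
      using y(2) \<open>y4 = 0\<close> by (simp add: vec_eq_iff)
    have "(transpose C *v yv) $ j = y1 * C$1$j + y2 * C$2$j + y3 * C$3$j" for j
      by (simp add: yv_def matrix_vector_mult_def transpose_def sum_3 mult.commute)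
    then have "transpose C *v yv = 0" using yc by (simp add: vec_eq_iff)
    then have "yv = 0" using cam_T_inj[OF assms(1)] by blast
    then have "y1 = 0" "y2 = 0" "y3 = 0" by (auto simp: yv_def vec3_eq)
    then show False using y(1) \<open>y4 = 0\<close> by simp
  qed
  moreover have "bdot (C $ i) Q = 0" for i using CQ matvec_nth[of C Q i] by simp
  moreover have "bdot (axis k 1) Q = 0" using Qk by (simp add: bdot_axis)
  ultimately have "Q = 0" using D4_inj by blast
  then have "P = (P $ k / c $ k) *s c" unfolding Q_def by simp
  then show ?thesis unfolding c_def by blast
qed

lemma cam_BC:
  assumes "camera C" "C ** B = mat 1"
  shows "\<exists>\<mu>. B *v (C *v Y) = Y + \<mu> *s center C"
proof -
  have "C *v (B *v (C *v Y)) = C *v Y"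
    by (metis assms(2) matrix_vector_mul_assoc matrix_vector_mul_lid)
  then have "C *v (B *v (C *v Y) - Y) = 0"
    by (simp add: matvec_diff)
  then obtain \<mu> where "B *v (C *v Y) - Y = \<mu> *s center C" using cam_ker[OF assms(1)] by blast
  then show ?thesis by (metis add.commute diff_add_cancel)
qed

lemma cam_cross_zero:
  assumes "camera C" "ind2 a b" "cross3c (C *v a) (C *v b) = 0"
  shows "\<exists>\<alpha> \<beta>. center C = \<alpha> *s a + \<beta> *s b"
proof -
  obtain \<alpha> \<beta> where ab: "\<alpha> \<noteq> 0 \<or> \<beta> \<noteq> 0" "\<alpha> *s (C *v a) + \<beta> *s (C *v b) = 0"
    using cross_zero_dep[OF assms(3)] by blast
  then have "C *v (\<alpha> *s a + \<beta> *s b) = 0" by (simp add: matvec_add matvec_scale)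
  then obtain \<mu> where mu: "\<alpha> *s a + \<beta> *s b = \<mu> *s center C" using cam_ker[OF assms(1)] by blast
  have "\<mu> \<noteq> 0" using mu ab(1) assms(2) by (auto simp: ind2_def)
  have mu': "\<forall>i. \<alpha> * a$i + \<beta> * b$i = \<mu> * center C $ i" using mu by (simp add: vec_eq_iff)
  have "center C = (\<alpha> / \<mu>) *s a + (\<beta> / \<mu>) *s b"
    unfolding vec_eq_iff
  proof
    fix i show "center C $ i = ((\<alpha> / \<mu>) *s a + (\<beta> / \<mu>) *s b) $ i"
      using mu'[rule_format, of i] \<open>\<mu> \<noteq> 0\<close> by (simp add: field_simps)
  qed
  then show ?thesis by blast
qed

lemma solve3:
  fixes y1 y2 y3 a b z :: complex
  assumes "y3 \<noteq> 0" "y1*a + y2*b + y3*z = 0"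
  shows "z = (-y1/y3)*a + (-y2/y3)*b"
proof -
  have "y3 * z = - (y1*a + y2*b)" using assms(2) by algebra
  then show ?thesis using assms(1) by (simp add: field_simps)
qed

lemma ispoly_bdot: "ispoly (\<lambda>k'. if k' = k then 1 else 0) (\<lambda>x. bdot w (x k))"
  unfolding bdot_def by (intro ispoly_sum ispoly_cmult ispoly_var) auto

lemma ispoly_epi:
  fixes A B :: "complex^3^4"
  shows "\<exists>d. ispoly d (\<lambda>x. D4 p (A *v x a) q (B *v x b))"
proof -
  define D where "D = (\<lambda>i::4. if i = 2 then (\<lambda>k'. if k' = a then 1 else 0)
      else if i = 4 then (\<lambda>k'. if k' = b then 1 else (0::nat)) else (\<lambda>_. 0))"
  let ?M = "\<lambda>x. mk4 p (A *v x a) q (B *v x b)"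
  have "ispoly (D i) (\<lambda>x. ?M x $ i $ j)" for i j
    using exhaust_4[of i] by (auto simp: D_def intro: ispoly_const ispoly_matvec)
  then have "ispoly (\<lambda>k. \<Sum>i\<in>UNIV. D i k) (\<lambda>x. det (?M x))" by (rule ispoly_det)
  then show ?thesis unfolding D4_def by blast
qed

lemma ispoly_trip:
  fixes A B C :: "complex^3^4"
  shows "\<exists>d. ispoly d (\<lambda>x. D4 (A *v x a) (B *v x b) (C *v x c) w)"
proof -
  define D where "D = (\<lambda>i::4. if i = 1 then (\<lambda>k'. if k' = a then 1 else 0)
      else if i = 2 then (\<lambda>k'. if k' = b then 1 else 0)
      else if i = 3 then (\<lambda>k'. if k' = c then 1 else (0::nat)) else (\<lambda>_. 0))"
  let ?M = "\<lambda>x. mk4 (A *v x a) (B *v x b) (C *v x c) w"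
  have "ispoly (D i) (\<lambda>x. ?M x $ i $ j)" for i j
    using exhaust_4[of i] by (auto simp: D_def intro: ispoly_const ispoly_matvec)
  then have "ispoly (\<lambda>k. \<Sum>i\<in>UNIV. D i k) (\<lambda>x. det (?M x))" by (rule ispoly_det)
  then show ?thesis unfolding D4_def by blast
qed

lemma zclosure_poly': "x \<in> zclosure S \<Longrightarrow> \<exists>d. ispoly d p \<Longrightarrow> (\<And>y. y \<in> S \<Longrightarrow> p y = 0) \<Longrightarrow> p x = 0"
  using zclosure_poly by blast

lemma cam_ind:
  assumes "camera C" "ind2 u v" "\<not> (\<exists>\<alpha> \<beta>. center C = \<alpha> *s u + \<beta> *s v)"
    "y1 *s (C *v u) + y2 *s (C *v v) = 0"
  shows "y1 = 0 \<and> y2 = 0"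
proof -
  have "C *v (y1 *s u + y2 *s v) = 0" using assms(4) by (simp add: matvec_add matvec_scale)
  then obtain \<mu> where mu: "y1 *s u + y2 *s v = \<mu> *s center C" using cam_ker[OF assms(1)] by blast
  show ?thesis
  proof (cases "\<mu> = 0")
    case True
    then show ?thesis using mu assms(2) by (simp add: ind2_def)
  next
    case False
    have mu': "\<forall>i. y1 * u$i + y2 * v$i = \<mu> * center C $ i" using mu by (simp add: vec_eq_iff)
    have "center C = (y1 / \<mu>) *s u + (y2 / \<mu>) *s v"
      unfolding vec_eq_iff
    proof
      fix i show "center C $ i = ((y1 / \<mu>) *s u + (y2 / \<mu>) *s v) $ i"
        using mu'[rule_format, of i] False by (simp add: field_simps)
    qed
    then show ?thesis using assms(3) by blast
  qed
qed

lemma step_i: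
  assumes "camera C" "ind2 u v" "\<not> (\<exists>\<alpha> \<beta>. center C = \<alpha> *s u + \<beta> *s v)"
    "bdot (cross3c (C *v u) (C *v v)) z = 0"
  shows "\<exists>s t. z = C *v (s *s u + t *s v)"
proof -
  have "det (mk3 (C *v u) (C *v v) z) = 0" using assms(4) by (simp add: det_mk3)
  from D3_dep[OF this] obtain y1 y2 y3 where y: "y1 \<noteq> 0 \<or> y2 \<noteq> 0 \<or> y3 \<noteq> 0"
    "y1 *s (C *v u) + y2 *s (C *v v) + y3 *s z = 0" by blast
  have "y3 \<noteq> 0"
  proof
    assume "y3 = 0"
    then have "y1 = 0 \<and> y2 = 0" using cam_ind[OF assms(1-3), of y1 y2] y(2) by simp
    then show False using y(1) \<open>y3 = 0\<close> by simp
  qed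
  have yc: "\<forall>i. y1 * (C *v u)$i + y2 * (C *v v)$i + y3 * z$i = 0" using y(2) by (simp add: vec_eq_iff)
  have "z = (- y1 / y3) *s (C *v u) + (- y2 / y3) *s (C *v v)"
    unfolding vec_eq_iff
  proof
    fix i show "z $ i = ((- y1 / y3) *s (C *v u) + (- y2 / y3) *s (C *v v)) $ i"
      using solve3[OF \<open>y3 \<noteq> 0\<close> yc[rule_format, of i]] by simp
  qed
  then have "z = C *v ((- y1 / y3) *s u + (- y2 / y3) *s v)" unfolding matvec_add matvec_scale .
  then show ?thesis by blast
qed

lemma solve4:
  fixes y1 y2 y3 y4 a b c w :: complex
  assumes "y1 \<noteq> 0" "y2*a + y3*b + y4*c + y1*w = 0"
  shows "w = (-y2/y1)*a + (-y3/y1)*b + (-y4/y1)*c"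
proof -
  have "w = (y1 * w) / y1" using assms(1) by simp
  also have "y1 * w = - (y2*a + y3*b + y4*c)" using assms(2) by algebra
  finally show ?thesis by (simp add: add_divide_distrib diff_divide_distrib)
qed

lemma plane_rep:
  assumes "D4 w u c v = 0" "ind2 u v" "\<not> (\<exists>\<alpha> \<beta>. c = \<alpha> *s u + \<beta> *s v)"
  shows "\<exists>p1 p2 p3. w = p1 *s u + p2 *s c + p3 *s v"
proof -
  from D4_dep[OF assms(1)] obtain y1 y2 y3 y4 where y: "y1 \<noteq> 0 \<or> y2 \<noteq> 0 \<or> y3 \<noteq> 0 \<or> y4 \<noteq> 0"
    "y1 *s w + y2 *s u + y3 *s c + y4 *s v = 0" by blast
  have "y1 \<noteq> 0"
  proof
    assume y10: "y1 = 0"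
    have "y3 = 0"
    proof (rule ccontr)
      assume "y3 \<noteq> 0"
      have yc: "\<forall>i. y2 * u$i + y4 * v$i + y3 * c$i = 0" using y(2) y10 by (simp add: vec_eq_iff algebra_simps)
      have "c = (- y2 / y3) *s u + (- y4 / y3) *s v"
        unfolding vec_eq_iff
      proof
        fix i show "c $ i = ((- y2 / y3) *s u + (- y4 / y3) *s v) $ i"
          using solve3[OF \<open>y3 \<noteq> 0\<close> yc[rule_format, of i]] by simp
      qed
      then show False using assms(3) by blast
    qed
    then have "y2 *s u + y4 *s v = 0" using y(2) y10 by simp
    then have "y2 = 0 \<and> y4 = 0" using assms(2) by (simp add: ind2_def)
    then show False using y(1) y10 \<open>y3 = 0\<close> by simp
  qed
  have yc: "\<forall>i. y2 * u$i + y3 * c$i + y4 * v$i + y1 * w$i = 0" using y(2) by (simp add: vec_eq_iff algebra_simps)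
  have "w = (- y2 / y1) *s u + (- y3 / y1) *s c + (- y4 / y1) *s v"
    unfolding vec_eq_iff
  proof
    fix i
    have "w $ i = (- y2 / y1) * u$i + (- y3 / y1) * c$i + (- y4 / y1) * v$i"
      by (rule solve4[OF \<open>y1 \<noteq> 0\<close> yc[rule_format, of i]])
    then show "w $ i = ((- y2 / y1) *s u + (- y3 / y1) *s c + (- y4 / y1) *s v) $ i" by simp
  qed
  then show ?thesis by blast
qed

lemma part1_sub:
  assumes "camera_arrangement Cs"
  shows "anch_point_mv Cs u v \<subseteq> {x \<in> point_mv Cs. \<forall>k. bdot (line_image (Cs k) u v) (x k) = 0}"
proof
  fix x assume x: "x \<in> anch_point_mv Cs u v"
  have "x \<in> point_mv Cs"
    using x unfolding anch_point_mv_def point_mv_def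
    by (rule set_mp[OF zclosure_mono, rotated]) blast
  moreover have "bdot (line_image (Cs k) u v) (x k) = 0" for k
  proof (rule zclosure_poly[OF x[unfolded anch_point_mv_def] ispoly_bdot])
    fix y assume "y \<in> {x. \<exists>X\<in>vec.span {u, v}. X \<noteq> 0 \<and> (\<forall>k. proj_rep (x k) (Cs k *v X))}"
    then obtain X where X: "X \<in> vec.span {u, v}" "\<forall>k. proj_rep (y k) (Cs k *v X)" by blast
    obtain \<alpha> \<beta> where ab: "X = \<alpha> *s u + \<beta> *s v" using X(1) by (auto simp: span2)
    obtain a where a: "y k = a *s (Cs k *v X)" using X(2) by (auto simp: proj_rep_def)
    show "bdot (line_image (Cs k) u v) (y k) = 0"
      unfolding a ab line_image_def
      by (simp add: matvec_add matvec_scale bdot_simps bdot_cross_1 bdot_cross_2)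
  qed
  ultimately show "x \<in> {x \<in> point_mv Cs. \<forall>k. bdot (line_image (Cs k) u v) (x k) = 0}" by blast
qed


lemma cr_trans:
  fixes si ti sj tj sk tk :: complex
  assumes "sj \<noteq> 0 \<or> tj \<noteq> 0" "si * tj - ti * sj = 0" "sj * tk - tj * sk = 0"
  shows "si * tk - ti * sk = 0"
proof -
  have "sj * (si * tk - ti * sk) = si * (sj * tk - tj * sk) + sk * (si * tj - ti * sj)" by algebra
  moreover have "tj * (si * tk - ti * sk) = ti * (sj * tk - tj * sk) + tk * (si * tj - ti * sj)" by algebra
  ultimately show ?thesis using assms by auto
qed

lemma part1_sup:
  assumes arr: "camera_arrangement Cs" and uv: "is_line u v"
    and nc: "\<forall>k. center (Cs k) \<notin> vec.span {u, v}"
    and ij: "vec.span {center (Cs i), center (Cs j), u, v} = UNIV"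
    and x: "x \<in> point_mv Cs" and on: "\<forall>k. bdot (line_image (Cs k) u v) (x k) = 0"
  shows "x \<in> anch_point_mv Cs u v"
proof -
  define c where "c k = center (Cs k)" for k
  have cam: "camera (Cs k)" for k using arr by (simp add: camera_arrangement_def)
  have ind: "ind2 u v" using uv is_line_ind2 by simp
  have nc': "\<not> (\<exists>\<alpha> \<beta>. c k = \<alpha> *s u + \<beta> *s v)" for k using nc by (auto simp: span2 c_def)
  have xpt: "x \<in> ptuples" using x unfolding point_mv_def by (rule zclosure_ptuples)
  have x0: "x k \<noteq> 0" for k using xpt by (simp add: ptuples_def)
  have "\<exists>s t. x k = Cs k *v (s *s u + t *s v)" for k
    using step_i[OF cam ind nc'[unfolded c_def]] on by (simp add: line_image_def)
  then obtain s t where st: "\<And>k. x k = Cs k *v (s k *s u + t k *s v)" by metis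
  obtain B where B: "\<And>k. Cs k ** B k = mat 1" using cam_rinv[OF cam] by metis
  have epi: "(s a * t b - t a * s b) * D4 (c a) u (c b) v = 0" for a b
  proof -
    have E: "D4 (c a) (B a *v x a) (c b) (B b *v x b) = 0"
    proof (rule zclosure_poly'[OF x[unfolded point_mv_def] ispoly_epi])
      fix y assume "y \<in> {x. \<exists>X. X \<noteq> 0 \<and> (\<forall>k. proj_rep (x k) (Cs k *v X))}"
      then obtain X where X: "\<forall>k. proj_rep (y k) (Cs k *v X)" by blast
      obtain \<alpha> where al: "y a = \<alpha> *s (Cs a *v X)" using X by (auto simp: proj_rep_def)
      obtain \<beta> where be: "y b = \<beta> *s (Cs b *v X)" using X by (auto simp: proj_rep_def)
      obtain \<mu> where mu: "B a *v (Cs a *v X) = X + \<mu> *s c a" using cam_BC[OF cam B] unfolding c_def by blast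
      obtain \<nu> where nu: "B b *v (Cs b *v X) = X + \<nu> *s c b" using cam_BC[OF cam B] unfolding c_def by blast
      show "D4 (c a) (B a *v y a) (c b) (B b *v y b) = 0"
        unfolding al be matvec_scale mu nu by (simp add: D4_lin)
    qed
    obtain \<mu> where mu: "B a *v x a = (s a *s u + t a *s v) + \<mu> *s c a"
      using cam_BC[OF cam B] unfolding c_def st by blast
    obtain \<nu> where nu: "B b *v x b = (s b *s u + t b *s v) + \<nu> *s c b"
      using cam_BC[OF cam B] unfolding c_def st by blast
    have sw: "D4 (c a) v (c b) u = - D4 (c a) u (c b) v" by (rule D4_swap24)
    have "D4 (c a) (B a *v x a) (c b) (B b *v x b) = (s a * t b - t a * s b) * D4 (c a) u (c b) v"
      unfolding mu nu by (simp add: D4_lin sw algebra_simps)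
    with E show ?thesis by simp
  qed
  have ij': "vec.span {c i, c j, u, v} = UNIV" using ij by (simp add: c_def)
  have dij: "D4 (c i) u (c j) v \<noteq> 0"
  proof
    assume "D4 (c i) u (c j) v = 0"
    from D4_ker[OF this] obtain z where z: "z \<noteq> 0" "bdot (c i) z = 0" "bdot u z = 0"
      "bdot (c j) z = 0" "bdot v z = 0" by blast
    then show False using span_UNIV_kill[OF ij'] by blast
  qed
  have dk: "D4 (c i) u (c k) v \<noteq> 0 \<or> D4 (c j) u (c k) v \<noteq> 0" for k
  proof (rule ccontr)
    assume "\<not> ?thesis"
    then have h: "D4 (c i) u (c k) v = 0" "D4 (c j) u (c k) v = 0" by auto
    obtain p1 p2 p3 where p: "c i = p1 *s u + p2 *s c k + p3 *s v"
      using plane_rep[OF h(1) ind nc'] by blast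
    obtain q1 q2 q3 where q: "c j = q1 *s u + q2 *s c k + q3 *s v"
      using plane_rep[OF h(2) ind nc'] by blast
    have "D4 (c i) u (c j) v = 0" unfolding p q by (simp add: D4_lin)
    then show False using dij by simp
  qed
  have r0: "s k \<noteq> 0 \<or> t k \<noteq> 0" for k
  proof (rule ccontr)
    assume "\<not> ?thesis"
    then have "x k = 0" using st[of k] by simp
    then show False using x0 by simp
  qed
  have crij: "s i * t j - t i * s j = 0" using epi[of i j] dij by simp
  have cr: "s i * t k - t i * s k = 0" for k
  proof (cases "D4 (c i) u (c k) v = 0")
    case False
    then show ?thesis using epi[of i k] by simp
  next
    case True
    then have "D4 (c j) u (c k) v \<noteq> 0" using dk by auto
    then have "s j * t k - t j * s k = 0" using epi[of j k] by simp
    then show ?thesis using cr_trans[OF r0[of j] crij] by simp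
  qed
  have "\<exists>l. s k = l * s i \<and> t k = l * t i" for k
  proof (cases "s i = 0")
    case False
    have "t k = (s k / s i) * t i" using cr[of k] False by (simp add: field_simps)
    then show ?thesis using False by (intro exI[of _ "s k / s i"]) simp
  next
    case True
    then have ti: "t i \<noteq> 0" using r0[of i] by simp
    have "s k = 0" using cr[of k] True ti by simp
    then show ?thesis using True ti by (intro exI[of _ "t k / t i"]) simp
  qed
  then obtain l where l: "\<And>k. s k = l k * s i" "\<And>k. t k = l k * t i" by metis
  define X where "X = s i *s u + t i *s v"
  have xk: "x k = l k *s (Cs k *v X)" for k
    unfolding st[of k] X_def l(1)[of k] l(2)[of k]
    by (simp add: matvec_add matvec_scale vector_smult_assoc)
  have "X \<in> vec.span {u, v}" unfolding X_def span2 by blast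
  moreover have "X \<noteq> 0" using xk[of i] x0[of i] by auto
  moreover have "proj_rep (x k) (Cs k *v X)" for k
  proof -
    have "Cs k *v X \<noteq> 0" using xk[of k] x0[of k] by auto
    moreover have "l k \<noteq> 0" using xk[of k] x0[of k] by auto
    ultimately show ?thesis unfolding proj_rep_def using xk[of k] by blast
  qed
  ultimately show ?thesis unfolding anch_point_mv_def
    by (intro zclosure_base[OF _ xpt]) blast
qed

lemma ind2_D: "ind2 a b \<Longrightarrow> \<alpha> *s a + \<beta> *s b = 0 \<Longrightarrow> \<alpha> = 0 \<and> \<beta> = 0"
  unfolding ind2_def by blast

lemma ind3_D: "ind3 a b c \<Longrightarrow> \<alpha> *s a + \<beta> *s b + \<gamma> *s c = 0 \<Longrightarrow> \<alpha> = 0 \<and> \<beta> = 0 \<and> \<gamma> = 0"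
  unfolding ind3_def by blast

lemma ind2_nz1: "ind2 a b \<Longrightarrow> a \<noteq> 0"
  using ind2_D[of a b 1 0] by auto

lemma ind2_nz2: "ind2 a b \<Longrightarrow> b \<noteq> 0"
  using ind2_D[of a b 0 1] by auto

lemma scale_zero_D: "\<gamma> *s (w::complex^'n) = 0 \<Longrightarrow> w \<noteq> 0 \<Longrightarrow> \<gamma> = 0"
  by (metis vector_mul_eq_0)

lemma nonzero_comp: "(z::complex^4) \<noteq> 0 \<Longrightarrow> \<exists>p. z $ p \<noteq> 0"
  by (auto simp: vec_eq_iff)

lemma annih:
  assumes "ind2 p q" "bdot h1 p = 0" "bdot h2 p = 0" "bdot h3 p = 0"
    "bdot h1 q = 0" "bdot h2 q = 0" "bdot h3 q = 0"
  shows "D4 h1 h2 h3 w = 0"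
proof (rule ccontr)
  assume D: "D4 h1 h2 h3 w \<noteq> 0"
  define z where "z = bdot w q *s p - bdot w p *s q"
  have "bdot h1 z = 0" "bdot h2 z = 0" "bdot h3 z = 0" "bdot w z = 0"
    using assms by (simp_all add: z_def bdot_simps)
  then have "z = 0" using D4_inj[OF D] by blast
  then have "bdot w q *s p + (- bdot w p) *s q = 0" by (simp add: z_def)
  then have "bdot w q = 0 \<and> - bdot w p = 0" using assms(1) unfolding ind2_def by blast
  then have "bdot w q = 0" "bdot w p = 0" by simp_all
  then have "p = 0" using D4_inj[OF D] assms(2-4) by blast
  then show False using ind2_nz1[OF assms(1)] by simp
qed

lemma dep3:
  assumes "\<forall>w. D4 h1 h2 h3 w = 0"
  shows "\<exists>y1 y2 y3. (y1 \<noteq> 0 \<or> y2 \<noteq> 0 \<or> y3 \<noteq> 0) \<and> y1 *s h1 + y2 *s h2 + y3 *s h3 = 0"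
proof -
  have "D4 h1 h2 h3 0 = 0" by (simp add: D4_zero)
  from D4_ker[OF this] obtain z where z: "z \<noteq> 0" "bdot h1 z = 0" "bdot h2 z = 0" "bdot h3 z = 0" by blast
  obtain p where p: "z $ p \<noteq> 0" using nonzero_comp[OF z(1)] by blast
  from D4_dep[OF assms[rule_format, of "axis p 1"]] obtain y1 y2 y3 y4 where
    y: "y1 \<noteq> 0 \<or> y2 \<noteq> 0 \<or> y3 \<noteq> 0 \<or> y4 \<noteq> 0" "y1 *s h1 + y2 *s h2 + y3 *s h3 + y4 *s axis p 1 = 0"
    by blast
  have "bdot (y1 *s h1 + y2 *s h2 + y3 *s h3 + y4 *s axis p 1) z = 0" using y(2) by simp
  then have "y4 * z $ p = 0" using z by (simp add: bdot_simps bdot_axis)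
  then have "y4 = 0" using p by simp
  then show ?thesis using y by auto
qed

lemma minor_exists:
  assumes "ind2 a b" shows "\<exists>p q. a$p * b$q - a$q * b$p \<noteq> 0"
proof (rule ccontr)
  assume "\<not> ?thesis"
  then have m: "\<forall>p q. a$p * b$q = a$q * b$p" by auto
  have "a \<noteq> 0" using ind2_nz1[OF assms] .
  then obtain p where p: "a $ p \<noteq> 0" using nonzero_comp by blast
  have "(b$p / a$p) *s a + (-1) *s b = 0"
    unfolding vec_eq_iff
  proof
    fix q show "((b$p / a$p) *s a + (-1) *s b) $ q = 0 $ q"
      using m[rule_format, of p q] p by (simp add: field_simps)
  qed
  from ind2_D[OF assms this] show False by simp
qed

lemma ext3:
  assumes "ind2 a b" "bdot h a = 0" "bdot h b = 0"
  shows "\<exists>w. bdot h w = 0 \<and> ind3 a b w"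
proof -
  obtain p q where pq: "a$p * b$q - a$q * b$p \<noteq> 0" using minor_exists[OF assms(1)] by blast
  have "D4 h (axis p 1) (axis q 1) 0 = 0" by (simp add: D4_zero)
  from D4_ker[OF this] obtain w where w: "w \<noteq> 0" "bdot h w = 0" "bdot (axis p 1) w = 0" "bdot (axis q 1) w = 0"
    by blast
  have wpq: "w $ p = 0" "w $ q = 0" using w(3,4) by (simp_all add: bdot_axis)
  have "ind3 a b w" unfolding ind3_def
  proof (intro allI impI)
    fix \<alpha> \<beta> \<gamma> assume h: "\<alpha> *s a + \<beta> *s b + \<gamma> *s w = 0"
    have e1: "\<alpha> * a$p + \<beta> * b$p = 0" using h wpq by (auto simp: vec_eq_iff dest: spec[of _ p])
    have e2: "\<alpha> * a$q + \<beta> * b$q = 0" using h wpq by (auto simp: vec_eq_iff dest: spec[of _ q])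
    have "\<alpha> * (a$p * b$q - a$q * b$p) = b$q * (\<alpha> * a$p + \<beta> * b$p) - b$p * (\<alpha> * a$q + \<beta> * b$q)" by algebra
    then have al: "\<alpha> = 0" using e1 e2 pq by simp
    have "\<beta> * (a$p * b$q - a$q * b$p) = a$p * (\<alpha> * a$q + \<beta> * b$q) - a$q * (\<alpha> * a$p + \<beta> * b$p)" by algebra
    then have be: "\<beta> = 0" using e1 e2 pq by simp
    have "\<gamma> *s w = 0" using h al be by simp
    then have "\<gamma> = 0" using w(1) by (rule scale_zero_D)
    then show "\<alpha> = 0 \<and> \<beta> = 0 \<and> \<gamma> = 0" using al be by simp
  qed
  then show ?thesis using w(2) by blast
qed

lemma bad_sub:
  assumes "ind3 X b w" "\<not> (\<exists>\<alpha>. c = \<alpha> *s X)"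
    "c = \<alpha> *s X + \<beta> *s (b + t *s w)" "c = \<alpha>' *s X + \<beta>' *s (b + t' *s w)"
  shows "t = t'"
proof -
  have "(\<alpha> - \<alpha>') *s X + (\<beta> - \<beta>') *s b + (\<beta> * t - \<beta>' * t') *s w = 0"
    using assms(3,4) by (simp add: vec_eq_iff algebra_simps)
  then have "\<alpha> - \<alpha>' = 0" "\<beta> - \<beta>' = 0" "\<beta> * t - \<beta>' * t' = 0" using assms(1) unfolding ind3_def by blast+
  moreover have "\<beta> \<noteq> 0"
  proof
    assume "\<beta> = 0" then have "c = \<alpha> *s X" using assms(3) by simp
    then show False using assms(2) by blast
  qed
  ultimately show ?thesis by (simp add: right_diff_distrib[symmetric])
qed

lemma bad_finite:
  assumes "ind3 X b w" "\<not> (\<exists>\<alpha>. c = \<alpha> *s X)"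
  shows "finite {t. \<exists>\<alpha> \<beta>. c = \<alpha> *s X + \<beta> *s (b + t *s w)}" (is "finite ?B")
proof (cases "?B = {}")
  case True then show ?thesis by simp
next
  case False
  then obtain t0 where "t0 \<in> ?B" by blast
  then have "?B \<subseteq> {t0}" using bad_sub[OF assms] by blast
  then show ?thesis by (rule finite_subset) simp
qed

lemma zclosure_limit:
  fixes P Q :: "'m::finite \<Rightarrow> complex^3"
  assumes "P \<in> ptuples" "finite F" "\<And>t. t \<notin> F \<Longrightarrow> (\<lambda>k. P k + t *s Q k) \<in> S"
  shows "P \<in> zclosure S"
  unfolding zclosure_def
proof (intro CollectI conjI allI impI assms(1))
  fix M c d assume "multihom M d" and van: "\<forall>y\<in>S. poly_eval M c y = 0"
  define f where "f t = poly_eval M c (\<lambda>k. P k + t *s Q k)" for t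
  have fe: "f = (\<lambda>t. \<Sum>\<alpha>\<in>M. c \<alpha> * (\<Prod>v\<in>UNIV. (P (fst v) $ snd v + t * Q (fst v) $ snd v) ^ \<alpha> v))"
    unfolding f_def poly_eval_def by simp
  have "continuous_on UNIV f"
    unfolding fe by (intro continuous_intros)
  then have "(f \<longlongrightarrow> f 0) (at 0)" by (simp add: continuous_on_def)
  moreover have "eventually (\<lambda>t. f t = 0) (at 0)"
  proof -
    have "eventually (\<lambda>t. \<forall>y\<in>F. t \<noteq> y) (at (0::complex))"
      using assms(2) by (intro eventually_ball_finite) (auto intro: eventually_neq_at_within)
    then show ?thesis
      by eventually_elim (use assms(3) van in \<open>auto simp: f_def\<close>)
  qed
  then have "(f \<longlongrightarrow> 0) (at 0)" by (rule tendsto_eventually)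
  then have "f 0 = 0" using \<open>(f \<longlongrightarrow> f 0) (at 0)\<close> LIM_unique by blast
  then show "poly_eval M c P = 0" by (simp add: f_def)
qed

lemma part2_sub:
  "anch_line_mv Cs X \<subseteq> {l \<in> line_mv Cs. \<forall>k. bdot (l k) (Cs k *v X) = 0}"
proof
  fix l assume l: "l \<in> anch_line_mv Cs X"
  have "l \<in> line_mv Cs"
    using l unfolding anch_line_mv_def line_mv_def
    by (rule set_mp[OF zclosure_mono, rotated]) blast
  moreover have "bdot (l k) (Cs k *v X) = 0" for k
  proof -
    have "bdot (Cs k *v X) (l k) = 0"
    proof (rule zclosure_poly[OF l[unfolded anch_line_mv_def] ispoly_bdot])
      fix y assume "y \<in> {l. \<exists>u. is_line X u \<and> (\<forall>k. proj_rep (l k) (line_image (Cs k) X u))}"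
      then obtain u where u: "\<forall>k. proj_rep (y k) (line_image (Cs k) X u)" by blast
      obtain a where a: "y k = a *s line_image (Cs k) X u" using u by (auto simp: proj_rep_def)
      show "bdot (Cs k *v X) (y k) = 0"
        unfolding a line_image_def by (simp add: bdot_simps bdot_comm[of _ "cross3c _ _"] bdot_cross_1)
    qed
    then show ?thesis by (simp add: bdot_comm)
  qed
  ultimately show "l \<in> {l \<in> line_mv Cs. \<forall>k. bdot (l k) (Cs k *v X) = 0}" by blast
qed

lemma in_SX:
  assumes cam: "\<And>k. camera (Cs k)" and ind: "ind2 X u"
    and lu: "\<And>k. bdot (l k) (Cs k *v u) = 0" and lX: "\<And>k. bdot (l k) (Cs k *v X) = 0"
    and nc: "\<And>k. \<not> (\<exists>\<alpha> \<beta>. center (Cs k) = \<alpha> *s X + \<beta> *s u)" and l0: "\<And>k. l k \<noteq> 0"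
  shows "l \<in> {l. \<exists>u. is_line X u \<and> (\<forall>k. proj_rep (l k) (line_image (Cs k) X u))}"
proof -
  have "proj_rep (l k) (line_image (Cs k) X u)" for k
  proof -
    have "cross3c (Cs k *v X) (Cs k *v u) \<noteq> 0"
      using cam_cross_zero[OF cam ind] nc by blast
    then show ?thesis unfolding line_image_def using cross_proj l0 lX lu by blast
  qed
  moreover have "is_line X u" using ind is_line_ind2 by simp
  ultimately show ?thesis by blast
qed

lemma part2_sup:
  assumes arr: "camera_arrangement Cs" and X0: "X \<noteq> 0"
    and Xc: "\<forall>k. X \<notin> vec.span {center (Cs k)}"
    and cc: "\<forall>i j. j \<noteq> i \<longrightarrow> center (Cs j) \<notin> vec.span {center (Cs i), X}"
    and l: "l \<in> line_mv Cs" and lX: "\<forall>k. bdot (l k) (Cs k *v X) = 0"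
  shows "l \<in> anch_line_mv Cs X"
proof -
  define c where "c k = center (Cs k)" for k
  define H where "H k = transpose (Cs k) *v l k" for k
  define SX where "SX = {l. \<exists>u. is_line X u \<and> (\<forall>k. proj_rep (l k) (line_image (Cs k) X u))}"
  have cam: "camera (Cs k)" for k using arr by (simp add: camera_arrangement_def)
  have lpt: "l \<in> ptuples" using l unfolding line_mv_def by (rule zclosure_ptuples)
  have l0: "l k \<noteq> 0" for k using lpt by (simp add: ptuples_def)
  have H0: "H k \<noteq> 0" for k using cam_T_inj[OF cam] l0 by (auto simp: H_def)
  have Hw: "bdot (H k) w = bdot (l k) (Cs k *v w)" for k w unfolding H_def by (rule bdot_transpose)
  have HX: "bdot (H k) X = 0" for k using lX Hw by simp
  have c0: "c k \<noteq> 0" and Cc: "Cs k *v c k = 0" for k using cam_center[OF cam] by (auto simp: c_def)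
  have Hc: "bdot (H k) (c k) = 0" for k using Hw Cc by simp
  have cX: "\<not> (\<exists>\<alpha>. c k = \<alpha> *s X)" for k
  proof
    assume "\<exists>\<alpha>. c k = \<alpha> *s X"
    then obtain \<alpha> where a: "c k = \<alpha> *s X" by blast
    then have "\<alpha> \<noteq> 0" using c0[of k] by auto
    then have "X = (1 / \<alpha>) *s c k" using a by (simp add: vector_smult_assoc)
    then show False using Xc by (auto simp: span1 c_def)
  qed
  have indXc: "ind2 X (c k)" for k
    unfolding ind2_def
  proof (intro allI impI)
    fix \<alpha> \<beta> assume h: "\<alpha> *s X + \<beta> *s c k = 0"
    have "\<alpha> = 0"
    proof (rule ccontr)
      assume "\<alpha> \<noteq> 0"
      have "\<forall>i. \<beta> * c k $ i + \<alpha> * X $ i = 0" using h by (simp add: vec_eq_iff algebra_simps)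
      then have "\<forall>i. X $ i = (- \<beta> / \<alpha>) * c k $ i"
        using solve3[OF \<open>\<alpha> \<noteq> 0\<close>, of \<beta> _ 0] by simp
      then have "X = (- \<beta> / \<alpha>) *s c k" by (simp add: vec_eq_iff)
      then show False using Xc unfolding c_def span1 by blast
    qed
    moreover then have "\<beta> = 0" using h c0[of k] scale_zero_D by simp
    ultimately show "\<alpha> = 0 \<and> \<beta> = 0" by simp
  qed
  have trip: "D4 (H a) (H b) (H d) w = 0" for a b d w
  proof -
    have "D4 (transpose (Cs a) *v l a) (transpose (Cs b) *v l b) (transpose (Cs d) *v l d) w = 0"
    proof (rule zclosure_poly'[OF l[unfolded line_mv_def] ispoly_trip])
      fix y assume "y \<in> {l. \<exists>u v. is_line u v \<and> (\<forall>k. proj_rep (l k) (line_image (Cs k) u v))}"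
      then obtain p q where pq: "is_line p q" "\<forall>k. proj_rep (y k) (line_image (Cs k) p q)" by blast
      have ind: "ind2 p q" using pq(1) is_line_ind2 by simp
      have ann: "bdot (transpose (Cs k) *v y k) p = 0 \<and> bdot (transpose (Cs k) *v y k) q = 0" for k
      proof -
        obtain \<alpha> where a: "y k = \<alpha> *s line_image (Cs k) p q" using pq(2) by (auto simp: proj_rep_def)
        show ?thesis unfolding bdot_transpose a line_image_def
          by (simp add: bdot_simps bdot_cross_1 bdot_cross_2)
      qed
      show "D4 (transpose (Cs a) *v y a) (transpose (Cs b) *v y b) (transpose (Cs d) *v y d) w = 0"
        using annih[OF ind] ann by blast
    qed
    then show ?thesis by (simp add: H_def)
  qed
  show ?thesis
  proof (cases "\<exists>a b. ind2 (H a) (H b)")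
    case True
    then obtain a b where ab: "ind2 (H a) (H b)" by blast
    obtain r where r: "X $ r \<noteq> 0" using nonzero_comp[OF X0] by blast
    have "D4 (H a) (H b) (axis r 1) 0 = 0" by (simp add: D4_zero)
    from D4_ker[OF this] obtain u where u: "u \<noteq> 0" "bdot (H a) u = 0" "bdot (H b) u = 0"
      "bdot (axis r 1) u = 0" by blast
    have ur: "u $ r = 0" using u(4) by (simp add: bdot_axis)
    have hu: "bdot (H k) u = 0" for k
    proof -
      from dep3[of "H a" "H b" "H k"] trip obtain y1 y2 y3 where
        y: "y1 \<noteq> 0 \<or> y2 \<noteq> 0 \<or> y3 \<noteq> 0" "y1 *s H a + y2 *s H b + y3 *s H k = 0" by blast
      have "y3 \<noteq> 0"
      proof
        assume "y3 = 0"
        then have "y1 = 0 \<and> y2 = 0" using ind2_D[OF ab, of y1 y2] y(2) by simp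
        then show False using y(1) \<open>y3 = 0\<close> by simp
      qed
      have "bdot (y1 *s H a + y2 *s H b + y3 *s H k) u = 0" using y(2) by simp
      then have "y3 * bdot (H k) u = 0" using u by (simp add: bdot_simps)
      then show ?thesis using \<open>y3 \<noteq> 0\<close> by simp
    qed
    have indXu: "ind2 X u" unfolding ind2_def
    proof (intro allI impI)
      fix \<alpha> \<beta> assume h: "\<alpha> *s X + \<beta> *s u = 0"
      then have "\<alpha> * X $ r + \<beta> * u $ r = 0" by (simp add: vec_eq_iff)
      then have "\<alpha> = 0" using ur r by simp
      moreover then have "\<beta> = 0" using h u(1) scale_zero_D by simp
      ultimately show "\<alpha> = 0 \<and> \<beta> = 0" by simp
    qed
    show ?thesis
    proof (cases "\<exists>j \<alpha> \<beta>. c j = \<alpha> *s X + \<beta> *s u")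
      case False
      have "l \<in> SX" unfolding SX_def
        by (rule in_SX[OF cam indXu]) (use hu Hw lX False l0 c_def in auto)
      then show ?thesis unfolding anch_line_mv_def SX_def by (rule zclosure_base[OF _ lpt])
    next
      case True
      then obtain j \<alpha> \<beta> where cj: "c j = \<alpha> *s X + \<beta> *s u" by blast
      have Hcj: "bdot (H k) (c j) = 0" for k unfolding cj by (simp add: bdot_simps HX hu)
      obtain w where w: "bdot (H j) w = 0" "ind3 X (c j) w" using ext3[OF indXc HX Hc] by blast
      have indXw: "ind2 X w" unfolding ind2_def
      proof (intro allI impI)
        fix \<alpha>' \<beta>' assume "\<alpha>' *s X + \<beta>' *s w = 0"
        then have "\<alpha>' *s X + 0 *s c j + \<beta>' *s w = 0" by simp
        then show "\<alpha>' = 0 \<and> \<beta>' = 0" using ind3_D[OF w(2)] by blast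
      qed
      have ncj: "\<not> (\<exists>\<alpha>' \<beta>'. c k = \<alpha>' *s X + \<beta>' *s c j)" if "k \<noteq> j" for k
      proof
        assume "\<exists>\<alpha>' \<beta>'. c k = \<alpha>' *s X + \<beta>' *s c j"
        then have "c k \<in> vec.span {c j, X}" unfolding span2 by (metis add.commute)
        then show False using cc that unfolding c_def by blast
      qed
      have "\<exists>a. k \<noteq> j \<longrightarrow> a \<noteq> 0 \<and> l k = a *s cross3c (Cs k *v X) (Cs k *v c j)" for k
      proof (cases "k = j")
        case False
        have "cross3c (Cs k *v X) (Cs k *v c j) \<noteq> 0"
          using cam_cross_zero[OF cam indXc] ncj[OF False] unfolding c_def by blast
        then have "proj_rep (l k) (cross3c (Cs k *v X) (Cs k *v c j))"
          using cross_proj l0 lX Hcj Hw by metis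
        then show ?thesis by (auto simp: proj_rep_def)
      qed simp
      then obtain a where a: "\<And>k. k \<noteq> j \<Longrightarrow> a k \<noteq> 0 \<and> l k = a k *s cross3c (Cs k *v X) (Cs k *v c j)"
        by metis
      have "cross3c (Cs j *v X) (Cs j *v w) \<noteq> 0"
      proof
        assume "cross3c (Cs j *v X) (Cs j *v w) = 0"
        from cam_cross_zero[OF cam indXw this] obtain \<alpha>' \<beta>' where "c j = \<alpha>' *s X + \<beta>' *s w"
          unfolding c_def by blast
        then have "\<alpha>' *s X + (-1) *s c j + \<beta>' *s w = 0" by simp
        from ind3_D[OF w(2) this] show False by simp
      qed
      then have "proj_rep (l j) (cross3c (Cs j *v X) (Cs j *v w))"
        using cross_proj l0 lX w(1) Hw by metis
      then obtain b where b: "b \<noteq> 0" "l j = b *s cross3c (Cs j *v X) (Cs j *v w)"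
        and crw: "cross3c (Cs j *v X) (Cs j *v w) \<noteq> 0" by (auto simp: proj_rep_def)
      define Q where "Q k = (if k = j then 0 else a k *s cross3c (Cs k *v X) (Cs k *v w))" for k
      define F where "F = insert 0 (\<Union>k. {t. \<exists>\<alpha> \<beta>. c k = \<alpha> *s X + \<beta> *s (c j + t *s w)})"
      have fF: "finite F" unfolding F_def using bad_finite[OF w(2) cX] by auto
      have "l \<in> zclosure SX"
      proof (rule zclosure_limit[OF lpt fF])
        fix t assume t: "t \<notin> F"
        then have t0: "t \<noteq> 0" by (simp add: F_def)
        define ut where "ut = c j + t *s w"
        have indXu: "ind2 X ut" unfolding ind2_def ut_def
        proof (intro allI impI)
          fix \<alpha>' \<beta>' assume "\<alpha>' *s X + \<beta>' *s (c j + t *s w) = 0"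
          then have "\<alpha>' *s X + \<beta>' *s c j + (\<beta>' * t) *s w = 0"
            by (simp add: vector_add_ldistrib vector_smult_assoc add.assoc)
          then show "\<alpha>' = 0 \<and> \<beta>' = 0" using ind3_D[OF w(2)] by blast
        qed
        have nb: "\<not> (\<exists>\<alpha> \<beta>. c k = \<alpha> *s X + \<beta> *s ut)" for k using t unfolding F_def ut_def by blast
        have "proj_rep (l k + t *s Q k) (line_image (Cs k) X ut)" for k
        proof (cases "k = j")
          case True
          have li: "line_image (Cs j) X ut = t *s cross3c (Cs j *v X) (Cs j *v w)"
            unfolding line_image_def ut_def using Cc[of j]
            by (simp add: matvec_add matvec_scale cross_add_right cross_scale_right)
          have "l k + t *s Q k = (b / t) *s line_image (Cs k) X ut"
            using True b(2) t0 by (simp add: li Q_def vector_smult_assoc)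
          moreover have "line_image (Cs k) X ut \<noteq> 0" using True li t0 crw by simp
          moreover have "b / t \<noteq> 0" using b(1) t0 by simp
          ultimately show ?thesis unfolding proj_rep_def by blast
        next
          case False
          have "l k + t *s Q k = a k *s line_image (Cs k) X ut"
            using False a[OF False] unfolding line_image_def ut_def Q_def
            by (simp add: matvec_add matvec_scale cross_add_right cross_scale_right
                vector_add_ldistrib vector_smult_assoc mult.commute)
          moreover have "line_image (Cs k) X ut \<noteq> 0"
            using cam_cross_zero[OF cam indXu] nb unfolding line_image_def c_def by blast
          ultimately show ?thesis unfolding proj_rep_def using a[OF False] by blast
        qed
        then show "(\<lambda>k. l k + t *s Q k) \<in> SX" unfolding SX_def using indXu is_line_ind2 by blast
      qed
      then show ?thesis unfolding anch_line_mv_def SX_def .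
    qed
  next
    case False
    define k0 where "k0 = (SOME k. Cs k = Cs k)"
    have propH: "bdot (H k) w = 0" if "bdot (H k0) w = 0" for k w
    proof -
      obtain \<alpha> \<beta> where ab: "\<alpha> *s H k0 + \<beta> *s H k = 0" "\<not> (\<alpha> = 0 \<and> \<beta> = 0)"
        using False unfolding ind2_def by blast
      have "\<beta> \<noteq> 0"
      proof
        assume "\<beta> = 0"
        then have "\<alpha> = 0" using ab(1) H0[of k0] scale_zero_D by simp
        then show False using ab(2) \<open>\<beta> = 0\<close> by simp
      qed
      have "bdot (\<alpha> *s H k0 + \<beta> *s H k) w = 0" using ab(1) by simp
      then have "\<beta> * bdot (H k) w = 0" using that by (simp add: bdot_simps)
      then show ?thesis using \<open>\<beta> \<noteq> 0\<close> by simp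
    qed
    obtain w where w: "bdot (H k0) w = 0" "ind3 X (c k0) w" using ext3[OF indXc HX Hc] by blast
    define F where "F = (\<Union>k. {t. \<exists>\<alpha> \<beta>. c k = \<alpha> *s X + \<beta> *s (c k0 + t *s w)})"
    have fF: "finite F" unfolding F_def using bad_finite[OF w(2) cX] by auto
    obtain t where t: "t \<notin> F" using ex_new_if_finite[OF infinite_UNIV_char_0 fF] by blast
    define u where "u = c k0 + t *s w"
    have indXu: "ind2 X u" unfolding ind2_def u_def
    proof (intro allI impI)
      fix \<alpha>' \<beta>' assume "\<alpha>' *s X + \<beta>' *s (c k0 + t *s w) = 0"
      then have "\<alpha>' *s X + \<beta>' *s c k0 + (\<beta>' * t) *s w = 0"
        by (simp add: vector_add_ldistrib vector_smult_assoc add.assoc)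
      then show "\<alpha>' = 0 \<and> \<beta>' = 0" using ind3_D[OF w(2)] by blast
    qed
    have Hu: "bdot (H k) u = 0" for k
      by (rule propH) (simp add: u_def bdot_simps Hc w(1))
    have nb: "\<not> (\<exists>\<alpha> \<beta>. c k = \<alpha> *s X + \<beta> *s u)" for k using t unfolding F_def u_def by blast
    have "l \<in> SX" unfolding SX_def
      by (rule in_SX[OF cam indXu]) (use Hu Hw lX nb l0 c_def in auto)
    then show ?thesis unfolding anch_line_mv_def SX_def by (rule zclosure_base[OF _ lpt])
  qed
qed

theorem proposition1p2:
  fixes Cs :: "'m::finite \<Rightarrow> complex^4^3"
  assumes "camera_arrangement Cs"
  shows "(\<forall>u v. is_line u v \<and> (\<forall>k. center (Cs k) \<notin> vec.span {u, v}) \<and>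
            (\<exists>i j. vec.span {center (Cs i), center (Cs j), u, v} = UNIV) \<longrightarrow>
            anch_point_mv Cs u v =
              {x \<in> point_mv Cs. \<forall>k. bdot (line_image (Cs k) u v) (x k) = 0}) \<and>
         (\<forall>X. X \<noteq> 0 \<and> (\<forall>k. X \<notin> vec.span {center (Cs k)}) \<and>
            (\<forall>i j. j \<noteq> i \<longrightarrow> center (Cs j) \<notin> vec.span {center (Cs i), X}) \<longrightarrow>
            anch_line_mv Cs X =
              {l \<in> line_mv Cs. \<forall>k. bdot (l k) (Cs k *v X) = 0})"
proof (intro conjI allI impI)
  fix u v
  assume h: "is_line u v \<and> (\<forall>k. center (Cs k) \<notin> vec.span {u, v}) \<and>
            (\<exists>i j. vec.span {center (Cs i), center (Cs j), u, v} = UNIV)"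
  then obtain i j where ij: "vec.span {center (Cs i), center (Cs j), u, v} = UNIV" by blast
  show "anch_point_mv Cs u v = {x \<in> point_mv Cs. \<forall>k. bdot (line_image (Cs k) u v) (x k) = 0}"
  proof
    show "anch_point_mv Cs u v \<subseteq> {x \<in> point_mv Cs. \<forall>k. bdot (line_image (Cs k) u v) (x k) = 0}"
      by (rule part1_sub[OF assms])
    show "{x \<in> point_mv Cs. \<forall>k. bdot (line_image (Cs k) u v) (x k) = 0} \<subseteq> anch_point_mv Cs u v"
      using part1_sup[OF assms _ _ ij] h by blast
  qed
next
  fix X
  assume h: "X \<noteq> 0 \<and> (\<forall>k. X \<notin> vec.span {center (Cs k)}) \<and>
            (\<forall>i j. j \<noteq> i \<longrightarrow> center (Cs j) \<notin> vec.span {center (Cs i), X})"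
  show "anch_line_mv Cs X = {l \<in> line_mv Cs. \<forall>k. bdot (l k) (Cs k *v X) = 0}"
  proof
    show "anch_line_mv Cs X \<subseteq> {l \<in> line_mv Cs. \<forall>k. bdot (l k) (Cs k *v X) = 0}"
      by (rule part2_sub)
    show "{l \<in> line_mv Cs. \<forall>k. bdot (l k) (Cs k *v X) = 0} \<subseteq> anch_line_mv Cs X"
      using part2_sup[OF assms] h by blast
  qed
qed

end
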